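(* Let $P$ be a special product rule. For every $P$-automaton $\mathcal A=\langle X,F,\Delta\rangle$ and all terms $u,v\in\mathrm{Terms}(X)$ with $u\approx v$, we have $[\![u]\!]_{\mathcal A}=[\![v]\!]_{\mathcal A}$.
   Context: Let $\Sigma$ be a finite alphabet, $\Sigma^*$ its finite words with empty word $\varepsilon$. A series is $f:\Sigma^*\to\mathbb Q$; $\delta_af$ ($a\in\Sigma$) is $w\mapsto f(aw)$. Terms: $\mathrm{Terms}(X)$ generated by $u,v::=x\mid 0\mid c\cdot u\mid u+v\mid u*v$ ($c\in\mathbb Q$). A product rule is a term $P$ over $\{x,\dot x,y,\dot y\}$; $P(s_1,\dots,s_4)$ denotes substitution. $u\approx v$ iff $u,v$ denote the same polynomial in $\mathbb Q[X]$ (constructors read as polynomial operations). $P$ is special if $P(x+y,\dot x+\dot y,z,\dot z)\approx P(x,\dot x,z,\dot z)+P(y,\dot y,z,\dot z)$, $P(x,\dot x,y*z,P(y,\dot y,z,\dot z))\approx P(x*y,P(x,\dot x,y,\dot y),z,\dot z)$, $P(x,\dot x,y,\dot y)\approx P(y,\dot y,x,\dot x)$. $P$-automaton: $\mathcal A=\langle X,F,\Delta\rangle$ with $F:X\to\mathbb Q$, $\Delta_a:X\to\mathrm{Terms}(X)$ for $a\in\Sigma$. The $P$-extension $\tilde D$ of $D:X\to\mathrm{Terms}(X)$ is $\tilde D0=0$, $\tilde Dx=Dx$, $\tilde D(c\alpha)=c\tilde D\alpha$, $\tilde D(\alpha+\beta)=\tilde D\alpha+\tilde D\beta$, $\tilde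 D(\alpha*\beta)=P(\alpha,\tilde D\alpha,\beta,\tilde D\beta)$. $F$ is extended to terms by evaluation in $\mathbb Q$. $[\![\alpha]\!]_{\mathcal A}$ is the unique series with $([\![\alpha]\!]_{\mathcal A})_\varepsilon=F(\alpha)$ and $\delta_a[\![\alpha]\!]_{\mathcal A}=[\![\tilde\Delta_a\alpha]\!]_{\mathcal A}$ for all $a$ (equivalently $[\![\alpha]\!]_{\mathcal A}(a_1\cdots a_n)=F(\tilde\Delta_{a_n}\cdots\tilde\Delta_{a_1}\alpha)$). *)

theory Defs
  imports Complex_Main "HOL-Library.Poly_Mapping"
begin

datatype 'v trm = Var 'v | Zero | Scal rat "'v trm" | Plus "'v trm" "'v trm" | Times "'v trm" "'v trm"

fun subst :: "('v \<Rightarrow> 'w trm) \<Rightarrow> 'v trm \<Rightarrow> 'w trm" where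
  "subst s (Var x) = s x"
| "subst s Zero = Zero"
| "subst s (Scal c u) = Scal c (subst s u)"
| "subst s (Plus u v) = Plus (subst s u) (subst s v)"
| "subst s (Times u v) = Times (subst s u) (subst s v)"

(* Q[X]: polynomials as finitely supported maps from monomials (finitely supported
   exponent vectors X =>0 nat) to rational coefficients, with convolution product *)
type_synonym 'v mpoly = "('v \<Rightarrow>\<^sub>0 nat) \<Rightarrow>\<^sub>0 rat"

fun poly_of :: "'v trm \<Rightarrow> 'v mpoly" where
  "poly_of (Var x) = Poly_Mapping.single (Poly_Mapping.single x 1) 1"
| "poly_of Zero = 0"
| "poly_of (Scal c u) = Poly_Mapping.single 0 c * poly_of u"
| "poly_of (Plus u v) = poly_of u + poly_of v"
| "poly_of (Times u v) = poly_of u * poly_of v"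

definition peq :: "'v trm \<Rightarrow> 'v trm \<Rightarrow> bool" where
  "peq u v \<longleftrightarrow> poly_of u = poly_of v"

datatype pvar = PX | PXd | PY | PYd

definition papp :: "pvar trm \<Rightarrow> 'w trm \<Rightarrow> 'w trm \<Rightarrow> 'w trm \<Rightarrow> 'w trm \<Rightarrow> 'w trm" where
  "papp P s1 s2 s3 s4 = subst (\<lambda>v. case v of PX \<Rightarrow> s1 | PXd \<Rightarrow> s2 | PY \<Rightarrow> s3 | PYd \<Rightarrow> s4) P"

datatype svar = SX | SXd | SY | SYd | SZ | SZd

definition special :: "pvar trm \<Rightarrow> bool" where
  "special P \<longleftrightarrow>
     peq (papp P (Plus (Var SX) (Var SY)) (Plus (Var SXd) (Var SYd)) (Var SZ) (Var SZd))
         (Plus (papp P (Var SX) (Var SXd) (Var SZ) (Var SZd)) (papp P (Var SY) (Var SYd) (Var SZ) (Var SZd)))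
   \<and> peq (papp P (Var SX) (Var SXd) (Times (Var SY) (Var SZ)) (papp P (Var SY) (Var SYd) (Var SZ) (Var SZd)))
         (papp P (Times (Var SX) (Var SY)) (papp P (Var SX) (Var SXd) (Var SY) (Var SYd)) (Var SZ) (Var SZd))
   \<and> peq (papp P (Var SX) (Var SXd) (Var SY) (Var SYd)) (papp P (Var SY) (Var SYd) (Var SX) (Var SXd))"

fun pext :: "pvar trm \<Rightarrow> ('x \<Rightarrow> 'x trm) \<Rightarrow> 'x trm \<Rightarrow> 'x trm" where
  "pext P D (Var x) = D x"
| "pext P D Zero = Zero"
| "pext P D (Scal c u) = Scal c (pext P D u)"
| "pext P D (Plus u v) = Plus (pext P D u) (pext P D v)"
| "pext P D (Times u v) = papp P u (pext P D u) v (pext P D v)"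

fun evalF :: "('x \<Rightarrow> rat) \<Rightarrow> 'x trm \<Rightarrow> rat" where
  "evalF F (Var x) = F x"
| "evalF F Zero = 0"
| "evalF F (Scal c u) = c * evalF F u"
| "evalF F (Plus u v) = evalF F u + evalF F v"
| "evalF F (Times u v) = evalF F u * evalF F v"

(* [[alpha]]_A (a1...an) = F(Delta~_an ... Delta~_a1 alpha); the automaton is <X,F,Delta>
   with X the variable type 'x *)
definition sem :: "pvar trm \<Rightarrow> ('x \<Rightarrow> rat) \<Rightarrow> ('a \<Rightarrow> 'x \<Rightarrow> 'x trm) \<Rightarrow> 'x trm \<Rightarrow> 'a list \<Rightarrow> rat" where
  "sem P F Delta alpha w = evalF F (fold (\<lambda>a t. pext P (Delta a) t) w alpha)"

end

theory Submission
  imports Defs "HOL-Library.Product_Plus"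
begin

locale qalg =
  fixes mul :: "'r::ab_group_add \<Rightarrow> 'r \<Rightarrow> 'r"
    and sc :: "rat \<Rightarrow> 'r \<Rightarrow> 'r"
  assumes mul_comm: "mul a b = mul b a"
    and mul_assoc: "mul (mul a b) c = mul a (mul b c)"
    and mul_add: "mul (a + b) c = mul a c + mul b c"
    and sc_add: "sc k (a + b) = sc k a + sc k b"
    and sc_add2: "sc (k + l) a = sc k a + sc l a"
    and sc_sc: "sc k (sc l a) = sc (k * l) a"
    and sc_one: "sc 1 a = a"
    and sc_mul: "mul (sc k a) b = sc k (mul a b)"
begin

lemma mul_add2: "mul c (a + b) = mul c a + mul c b"
  using mul_add mul_comm by metis

lemma mul_zero[simp]: "mul 0 b = 0" "mul b 0 = 0"
proof -
  have "mul 0 b = mul 0 b + mul 0 b" using mul_add[of 0 0 b] by simp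
  then show "mul 0 b = 0" by simp
  then show "mul b 0 = 0" using mul_comm by metis
qed

lemma sc_zero[simp]: "sc 0 a = 0" "sc k 0 = 0"
proof -
  have "sc 0 a = sc 0 a + sc 0 a" using sc_add2[of 0 0 a] by simp
  then show "sc 0 a = 0" by simp
  have "sc k 0 = sc k 0 + sc k 0" using sc_add[of k 0 0] by simp
  then show "sc k 0 = 0" by simp
qed

lemma sc_mul2: "mul b (sc k a) = sc k (mul b a)"
  using sc_mul mul_comm by metis

definition mulU :: "rat \<times> 'r \<Rightarrow> rat \<times> 'r \<Rightarrow> rat \<times> 'r" where
  "mulU a b = (fst a * fst b, sc (fst a) (snd b) + sc (fst b) (snd a) + mul (snd a) (snd b))"

definition scU :: "rat \<Rightarrow> rat \<times> 'r \<Rightarrow> rat \<times> 'r" where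
  "scU k a = (k * fst a, sc k (snd a))"

lemma mulU_comm: "mulU a b = mulU b a"
  unfolding mulU_def by (simp add: mul_comm[of "snd a"] algebra_simps)

lemma mulU_assoc: "mulU (mulU a b) c = mulU a (mulU b c)"
  unfolding mulU_def
  by (simp add: sc_add sc_add2 sc_sc sc_mul sc_mul2 mul_add mul_add2 mul_assoc algebra_simps)

lemma mulU_one: "mulU (1, 0) a = a"
  unfolding mulU_def by (simp add: sc_one)

lemma mulU_add: "mulU (a + b) c = mulU a c + mulU b c"
  unfolding mulU_def by (simp add: sc_add sc_add2 mul_add algebra_simps)

lemma mulU_add2: "mulU c (a + b) = mulU c a + mulU c b"
  using mulU_add mulU_comm by metis

lemma mulU_zero[simp]: "mulU 0 a = 0" "mulU a 0 = 0"
  unfolding mulU_def by (simp_all add: zero_prod_def)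

lemma scU_add: "scU k (a + b) = scU k a + scU k b"
  unfolding scU_def by (simp add: sc_add algebra_simps)

lemma scU_add2: "scU (k + l) a = scU k a + scU l a"
  unfolding scU_def by (simp add: sc_add2 algebra_simps)

lemma scU_zero[simp]: "scU 0 a = 0" "scU k 0 = 0"
  unfolding scU_def by (simp_all add: zero_prod_def)

lemma scU_mulU: "mulU (scU k a) (scU l b) = scU (k * l) (mulU a b)"
  unfolding scU_def mulU_def
  by (simp add: sc_add sc_sc sc_mul sc_mul2 algebra_simps)

lemma mulU_sum: "mulU (sum f S) c = sum (\<lambda>x. mulU (f x) c) S"
  by (induction S rule: infinite_finite_induct) (simp_all add: mulU_add)

lemma mulU_sum2: "mulU c (sum f S) = sum (\<lambda>x. mulU c (f x)) S"
  by (induction S rule: infinite_finite_induct) (simp_all add: mulU_add2)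

sublocale U: comm_monoid_set mulU "(1, 0)"
  by unfold_locales (metis mulU_assoc mulU_comm mulU_one)+

definition powU :: "rat \<times> 'r \<Rightarrow> nat \<Rightarrow> rat \<times> 'r" where
  "powU a n = (mulU a ^^ n) (1, 0)"

lemma powU_0[simp]: "powU a 0 = (1, 0)" by (simp add: powU_def)
lemma powU_Suc: "powU a (Suc n) = mulU a (powU a n)" by (simp add: powU_def)

lemma powU_add: "powU a (m + n) = mulU (powU a m) (powU a n)"
  by (induction m) (simp_all add: powU_Suc mulU_one mulU_assoc)

definition monU :: "('v \<Rightarrow> 'r) \<Rightarrow> ('v \<Rightarrow>\<^sub>0 nat) \<Rightarrow> rat \<times> 'r" where
  "monU \<sigma> m = U.F (\<lambda>x. powU (0, \<sigma> x) (Poly_Mapping.lookup m x)) (Poly_Mapping.keys m)"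

lemma monU_superset: "finite S \<Longrightarrow> Poly_Mapping.keys m \<subseteq> S \<Longrightarrow>
   monU \<sigma> m = U.F (\<lambda>x. powU (0, \<sigma> x) (Poly_Mapping.lookup m x)) S"
  unfolding monU_def by (rule U.mono_neutral_left) (auto simp: in_keys_iff)

lemma monU_add: "monU \<sigma> (m + m') = mulU (monU \<sigma> m) (monU \<sigma> m')"
proof -
  let ?S = "Poly_Mapping.keys m \<union> Poly_Mapping.keys m'"
  have "monU \<sigma> (m + m') = U.F (\<lambda>x. powU (0, \<sigma> x) (Poly_Mapping.lookup (m + m') x)) ?S"
    by (rule monU_superset) (auto simp: keys_add)
  also have "\<dots> = U.F (\<lambda>x. mulU (powU (0, \<sigma> x) (Poly_Mapping.lookup m x)) (powU (0, \<sigma> x) (Poly_Mapping.lookup m' x))) ?S"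
    by (simp add: lookup_add powU_add)
  also have "\<dots> = mulU (monU \<sigma> m) (monU \<sigma> m')"
    by (simp add: U.distrib monU_superset[of ?S])
  finally show ?thesis .
qed

lemma monU_zero[simp]: "monU \<sigma> 0 = (1, 0)"
  by (simp add: monU_def)

lemma monU_var: "monU \<sigma> (Poly_Mapping.single x 1) = (0, \<sigma> x)"
  by (simp add: monU_def powU_Suc mulU_def sc_one)

definition evU :: "('v \<Rightarrow> 'r) \<Rightarrow> (('v \<Rightarrow>\<^sub>0 nat) \<Rightarrow>\<^sub>0 rat) \<Rightarrow> rat \<times> 'r" where
  "evU \<sigma> p = (\<Sum>m\<in>Poly_Mapping.keys p. scU (Poly_Mapping.lookup p m) (monU \<sigma> m))"

lemma evU_superset: "finite S \<Longrightarrow> Poly_Mapping.keys p \<subseteq> S \<Longrightarrow>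
   evU \<sigma> p = (\<Sum>m\<in>S. scU (Poly_Mapping.lookup p m) (monU \<sigma> m))"
  unfolding evU_def by (rule sum.mono_neutral_left) (auto simp: in_keys_iff)

lemma evU_add: "evU \<sigma> (p + q) = evU \<sigma> p + evU \<sigma> q"
proof -
  let ?S = "Poly_Mapping.keys p \<union> Poly_Mapping.keys q"
  have "evU \<sigma> (p + q) = (\<Sum>m\<in>?S. scU (Poly_Mapping.lookup (p + q) m) (monU \<sigma> m))"
    by (rule evU_superset) (auto simp: keys_add)
  also have "\<dots> = evU \<sigma> p + evU \<sigma> q"
    by (simp add: lookup_add scU_add2 sum.distrib evU_superset[of ?S])
  finally show ?thesis .
qed

lemma evU_zero[simp]: "evU \<sigma> 0 = 0"
  by (simp add: evU_def)

lemma evU_sum: "evU \<sigma> (sum f S) = (\<Sum>x\<in>S. evU \<sigma> (f x))"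
  by (induction S rule: infinite_finite_induct) (simp_all add: evU_add)

lemma evU_single: "evU \<sigma> (Poly_Mapping.single m c) = scU c (monU \<sigma> m)"
  by (cases "c = 0") (simp_all add: evU_def)

lemma pm_expand: "p = (\<Sum>m\<in>Poly_Mapping.keys p. Poly_Mapping.single m (Poly_Mapping.lookup p m))"
  by (rule poly_mapping_eqI) (simp add: lookup_sum lookup_single when_def in_keys_iff)

lemma evU_mult: "evU \<sigma> (p * q) = mulU (evU \<sigma> p) (evU \<sigma> q)"
proof -
  have "p * q = (\<Sum>m\<in>Poly_Mapping.keys p. \<Sum>m'\<in>Poly_Mapping.keys q.
      Poly_Mapping.single (m + m') (Poly_Mapping.lookup p m * Poly_Mapping.lookup q m'))"
    by (subst pm_expand[of p], subst pm_expand[of q])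
       (simp add: sum_distrib_left sum_distrib_right mult_single, rule sum.swap)
  then have "evU \<sigma> (p * q) = (\<Sum>m\<in>Poly_Mapping.keys p. \<Sum>m'\<in>Poly_Mapping.keys q.
      mulU (scU (Poly_Mapping.lookup p m) (monU \<sigma> m)) (scU (Poly_Mapping.lookup q m') (monU \<sigma> m')))"
    by (simp add: evU_sum evU_single scU_mulU monU_add)
  also have "\<dots> = mulU (evU \<sigma> p) (evU \<sigma> q)"
    by (simp add: evU_def mulU_sum mulU_sum2, rule sum.swap)
  finally show ?thesis .
qed

primrec evalR :: "('v \<Rightarrow> 'r) \<Rightarrow> 'v trm \<Rightarrow> 'r" where
  "evalR \<sigma> (Var x) = \<sigma> x"
| "evalR \<sigma> Zero = 0"
| "evalR \<sigma> (Scal c u) = sc c (evalR \<sigma> u)"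
| "evalR \<sigma> (Plus u v) = evalR \<sigma> u + evalR \<sigma> v"
| "evalR \<sigma> (Times u v) = mul (evalR \<sigma> u) (evalR \<sigma> v)"

lemma evU_poly_of: "evU \<sigma> (poly_of u) = (0, evalR \<sigma> u)"
  by (induction u)
     (simp_all add: evU_single monU_var monU_var[unfolded One_nat_def] scU_def evU_add evU_mult mulU_def zero_prod_def sc_one)

lemma evalR_peq: "peq u v \<Longrightarrow> evalR \<sigma> u = evalR \<sigma> v"
  unfolding peq_def using evU_poly_of[of \<sigma> u] evU_poly_of[of \<sigma> v] by simp


lemma evalR_subst: "evalR \<tau> (subst s t) = evalR (\<lambda>v. evalR \<tau> (s v)) t"
  by (induction t) simp_all

definition papR :: "pvar trm \<Rightarrow> 'r \<Rightarrow> 'r \<Rightarrow> 'r \<Rightarrow> 'r \<Rightarrow> 'r" where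
  "papR P a b c d = evalR (\<lambda>v. case v of PX \<Rightarrow> a | PXd \<Rightarrow> b | PY \<Rightarrow> c | PYd \<Rightarrow> d) P"

lemma evalR_papp: "evalR \<tau> (papp P s1 s2 s3 s4) =
   papR P (evalR \<tau> s1) (evalR \<tau> s2) (evalR \<tau> s3) (evalR \<tau> s4)"
proof -
  have "(\<lambda>v. evalR \<tau> (case v of PX \<Rightarrow> s1 | PXd \<Rightarrow> s2 | PY \<Rightarrow> s3 | PYd \<Rightarrow> s4)) =
     (\<lambda>v. case v of PX \<Rightarrow> evalR \<tau> s1 | PXd \<Rightarrow> evalR \<tau> s2 | PY \<Rightarrow> evalR \<tau> s3 | PYd \<Rightarrow> evalR \<tau> s4)"
    by (rule ext) (simp split: pvar.split)
  then show ?thesis unfolding papp_def papR_def evalR_subst by simp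
qed

lemma special_R:
  assumes "special P"
  shows "papR P (a + b) (a' + b') c c' = papR P a a' c c' + papR P b b' c c'"
    and "papR P a a' (mul b c) (papR P b b' c c') = papR P (mul a b) (papR P a a' b b') c c'"
    and "papR P a a' b b' = papR P b b' a a'"
proof -
  define \<tau> where "\<tau> = (\<lambda>v. case v of SX \<Rightarrow> a | SXd \<Rightarrow> a' | SY \<Rightarrow> b | SYd \<Rightarrow> b' | SZ \<Rightarrow> c | SZd \<Rightarrow> c')"
  from assms have s1: "peq (papp P (Plus (Var SX) (Var SY)) (Plus (Var SXd) (Var SYd)) (Var SZ) (Var SZd))
         (Plus (papp P (Var SX) (Var SXd) (Var SZ) (Var SZd)) (papp P (Var SY) (Var SYd) (Var SZ) (Var SZd)))"
   and s2: "peq (papp P (Var SX) (Var SXd) (Times (Var SY) (Var SZ)) (papp P (Var SY) (Var SYd) (Var SZ) (Var SZd)))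
         (papp P (Times (Var SX) (Var SY)) (papp P (Var SX) (Var SXd) (Var SY) (Var SYd)) (Var SZ) (Var SZd))"
   and s3: "peq (papp P (Var SX) (Var SXd) (Var SY) (Var SYd)) (papp P (Var SY) (Var SYd) (Var SX) (Var SXd))"
    unfolding special_def by auto
  show "papR P (a + b) (a' + b') c c' = papR P a a' c c' + papR P b b' c c'"
    using evalR_peq[OF s1, of \<tau>] by (simp add: evalR_papp \<tau>_def)
  show "papR P a a' (mul b c) (papR P b b' c c') = papR P (mul a b) (papR P a a' b b') c c'"
    using evalR_peq[OF s2, of \<tau>] by (simp add: evalR_papp \<tau>_def)
  show "papR P a a' b b' = papR P b b' a a'"
    using evalR_peq[OF s3, of \<tau>] by (simp add: evalR_papp \<tau>_def)
qed

lemma sc_neg: "sc (- k) a = - sc k a"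
proof -
  have "sc k a + sc (-k) a = 0" using sc_add2[of k "-k" a] by simp
  then show ?thesis using minus_unique by metis
qed


lemma additive_hom:
  assumes add: "\<And>a b a' b'. g (a + b) (a' + b') = g a a' + g b b'"
  shows "g (sc k a) (sc k a') = sc k (g a a')"
proof -
  have g0: "g 0 0 = 0" using add[of 0 0 0 0] by simp
  have gneg: "g (- a) (- a') = - g a a'" for a a'
  proof -
    have "g a a' + g (-a) (-a') = 0" using add[of a "-a" a' "-a'"] g0 by simp
    then show ?thesis using minus_unique by metis
  qed
  have gnat: "g (sc (of_nat n) a) (sc (of_nat n) a') = sc (of_nat n) (g a a')" for n a a'
  proof (induction n)
    case 0 then show ?case using g0 by simp
  next
    case (Suc n)
    have "g (sc (of_nat (Suc n)) a) (sc (of_nat (Suc n)) a') =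
          g (a + sc (of_nat n) a) (a' + sc (of_nat n) a')"
      by (simp add: sc_add2 sc_one)
    also have "\<dots> = g a a' + sc (of_nat n) (g a a')" using add Suc by simp
    also have "\<dots> = sc (of_nat (Suc n)) (g a a')" by (simp add: sc_add2 sc_one)
    finally show ?case .
  qed
  have gint: "g (sc (of_int n) a) (sc (of_int n) a') = sc (of_int n) (g a a')" for n a a'
  proof (cases "n \<ge> 0")
    case True
    then obtain m where "n = int m" by (metis nonneg_eq_int)
    then show ?thesis using gnat by simp
  next
    case False
    then obtain m where "n = - int m" by (metis nonpos_int_cases linorder_not_le less_imp_le)
    then show ?thesis using gnat gneg by (simp add: sc_neg)
  qed
  obtain n d where q: "quotient_of k = (n, d)" by (cases "quotient_of k")
  then have kd: "k = of_int n / of_int d" and dpos: "d > 0"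
    by (auto simp: quotient_of_div quotient_of_denom_pos)
  have dk: "of_int d * k = (of_int n :: rat)" using kd dpos by simp
  have "sc (of_int d) (g (sc k a) (sc k a')) = g (sc (of_int n) a) (sc (of_int n) a')"
    by (simp add: gint[symmetric] sc_sc dk)
  also have "\<dots> = sc (of_int n) (g a a')" by (rule gint)
  finally have eq: "sc (of_int d) (g (sc k a) (sc k a')) = sc (of_int n) (g a a')" .
  have "g (sc k a) (sc k a') = sc (1 / of_int d) (sc (of_int d) (g (sc k a) (sc k a')))"
    using dpos by (simp add: sc_sc sc_one)
  also have "\<dots> = sc k (g a a')" using eq kd by (simp add: sc_sc)
  finally show ?thesis .
qed

end


lemma qalg_rat: "qalg ((*) :: rat \<Rightarrow> rat \<Rightarrow> rat) (*)"
  by unfold_locales (simp_all add: algebra_simps)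

definition msc :: "rat \<Rightarrow> 'v mpoly \<Rightarrow> 'v mpoly" where
  "msc k p = Poly_Mapping.single 0 k * p"

lemma qalg_mpoly: "qalg ((*) :: 'v mpoly \<Rightarrow> 'v mpoly \<Rightarrow> 'v mpoly) msc"
  by unfold_locales
     (simp_all add: msc_def algebra_simps mult_single single_add)

definition pmul :: "pvar trm \<Rightarrow> 'v mpoly \<times> 'v mpoly \<Rightarrow> 'v mpoly \<times> 'v mpoly \<Rightarrow> 'v mpoly \<times> 'v mpoly" where
  "pmul P x y = (fst x * fst y, qalg.papR (*) msc P (fst x) (snd x) (fst y) (snd y))"

definition psc :: "rat \<Rightarrow> 'v mpoly \<times> 'v mpoly \<Rightarrow> 'v mpoly \<times> 'v mpoly" where
  "psc k x = (msc k (fst x), msc k (snd x))"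

lemma qalg_pair:
  assumes sp: "special P"
  shows "qalg (pmul P :: 'v mpoly \<times> 'v mpoly \<Rightarrow> _) psc"
proof -
  interpret M: qalg "(*) :: 'v mpoly \<Rightarrow> 'v mpoly \<Rightarrow> 'v mpoly" msc by (rule qalg_mpoly)
  note R = M.special_R[OF sp]
  show ?thesis
  proof
    fix a b c :: "'v mpoly \<times> 'v mpoly" and k l :: rat
    show "pmul P a b = pmul P b a"
      by (simp add: pmul_def mult.commute R(3))
    show "pmul P (pmul P a b) c = pmul P a (pmul P b c)"
      by (simp add: pmul_def mult.assoc R(2))
    show "pmul P (a + b) c = pmul P a c + pmul P b c"
      by (simp add: pmul_def distrib_right R(1))
    show "psc k (a + b) = psc k a + psc k b"
      by (simp add: psc_def M.sc_add)
    show "psc (k + l) a = psc k a + psc l a"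
      by (simp add: psc_def M.sc_add2)
    show "psc k (psc l a) = psc (k * l) a"
      by (simp add: psc_def M.sc_sc)
    show "psc 1 a = a"
      by (simp add: psc_def M.sc_one)
    have h: "M.papR P (msc k x) (msc k x') y y' = msc k (M.papR P x x' y y')" for x x' y y'
      by (rule M.additive_hom[where g = "\<lambda>x x'. M.papR P x x' y y'"]) (rule R(1))
    show "pmul P (psc k a) b = psc k (pmul P a b)"
      by (simp add: pmul_def psc_def M.sc_mul h)
  qed
qed

lemma poly_of_evalR: "poly_of t = qalg.evalR (*) msc (\<lambda>x. poly_of (Var x)) t"
  by (induction t) (simp_all add: qalg.evalR.simps[OF qalg_mpoly] msc_def[symmetric])

lemma poly_of_papp: "poly_of (papp P s1 s2 s3 s4) =
   qalg.papR (*) msc P (poly_of s1) (poly_of s2) (poly_of s3) (poly_of s4)"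
proof -
  let ?V = "\<lambda>x. poly_of (Var x :: 'a trm)"
  have "poly_of (papp P s1 s2 s3 s4) = qalg.evalR (*) msc ?V (papp P s1 s2 s3 s4)"
    by (rule poly_of_evalR)
  also have "\<dots> = qalg.papR (*) msc P (qalg.evalR (*) msc ?V s1) (qalg.evalR (*) msc ?V s2)
      (qalg.evalR (*) msc ?V s3) (qalg.evalR (*) msc ?V s4)"
    by (rule qalg.evalR_papp[OF qalg_mpoly])
  finally show ?thesis by (simp only: poly_of_evalR[symmetric])
qed

lemma pmul_Pair: "pmul P (a, a') (b, b') = (a * b, qalg.papR (*) msc P a a' b b')"
  by (simp add: pmul_def)

lemma psc_Pair: "psc k (a, a') = (msc k a, msc k a')"
  by (simp add: psc_def)

lemma pair_eval:
  assumes sp: "special P"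
  shows "qalg.evalR (pmul P) psc (\<lambda>x. (poly_of (Var x), poly_of (D x))) u = (poly_of u, poly_of (pext P D u))"
  by (induction u) (simp_all add: qalg.evalR.simps[OF qalg_pair[OF sp]] pmul_Pair psc_Pair zero_prod_def msc_def[symmetric] poly_of_papp)

lemma peq_pext: "special P \<Longrightarrow> peq u v \<Longrightarrow> peq (pext P D u) (pext P D v)"
proof -
  assume a: "special P" "peq u v"
  have "qalg.evalR (pmul P) psc (\<lambda>x. (poly_of (Var x), poly_of (D x))) u =
        qalg.evalR (pmul P) psc (\<lambda>x. (poly_of (Var x), poly_of (D x))) v"
    by (rule qalg.evalR_peq[OF qalg_pair[OF a(1)] a(2)])
  then have "(poly_of u, poly_of (pext P D u)) = (poly_of v, poly_of (pext P D v))"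
    by (simp only: pair_eval[OF a(1)])
  then show ?thesis by (simp add: peq_def)
qed

lemma peq_fold: "special P \<Longrightarrow> peq u v \<Longrightarrow>
   peq (fold (\<lambda>a t. pext P (Delta a) t) w u) (fold (\<lambda>a t. pext P (Delta a) t) w v)"
  by (induction w arbitrary: u v) (simp_all add: peq_pext)

lemma evalF_evalR: "evalF F u = qalg.evalR (*) (*) F u"
  by (induction u) (simp_all add: qalg.evalR.simps[OF qalg_rat])

theorem mainTheorem9:
  fixes P :: "pvar trm"
    and F :: "'x \<Rightarrow> rat"
    and Delta :: "'a::finite \<Rightarrow> 'x \<Rightarrow> 'x trm"
    and u v :: "'x trm"
  assumes "special P"
    and "peq u v"
  shows "sem P F Delta u = sem P F Delta v"
proof
  fix w
  show "sem P F Delta u w = sem P F Delta v w"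
    unfolding sem_def evalF_evalR
    by (rule qalg.evalR_peq[OF qalg_rat], rule peq_fold[OF assms])
qed

end
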